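(* Let $\Theta=\{1,2\}$, let $P_1,\dots,P_m$ be experiments, and let $(A,u)$ be a decision problem equivalent to $\bigoplus_{\ell=1}^k(A_\ell,u_\ell)$ for some decision problems $(A_1,u_1),\dots,(A_k,u_k)$. Let $\sigma:\mathbf Y\to\Delta(A_1\times\cdots\times A_k)$ be robustly optimal for $\bigoplus_{\ell=1}^k(A_\ell,u_\ell)$, and let $\sigma_\ell(\mathbf y)\in\Delta(A_\ell)$ denote the marginal of $\sigma(\mathbf y)$ on $A_\ell$. Then there exists $\sigma^*:\mathbf Y\to\Delta(A)$ such that $$u(\sigma^*(\mathbf y))\ge\sum_{\ell=1}^k u_\ell(\sigma_\ell(\mathbf y))\quad\text{for all }\mathbf y\in\mathbf Y,$$ and every $\sigma^*$ with this property is robustly optimal for $(A,u)$.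
   Context: $\Theta$ is a finite set of states. A decision problem is a pair $(A,u)$ with $A$ a finite nonempty action set and $u:\Theta\times A\to\mathbb{R}$; for $\alpha\in\Delta(A)$ write $u(\theta,\alpha)=\sum_a\alpha(a)u(\theta,a)$ and $u(\alpha)=(u(\theta,\alpha))_{\theta\in\Theta}\in\mathbb{R}^\Theta$; inequalities between vectors are componentwise. An experiment is a map $P:\Theta\to\Delta(Y)$ with $Y$ a finite signal set. Given experiments $P_j:\Theta\to\Delta(Y_j)$, $j=1,\dots,m$, let $\mathbf Y=Y_1\times\cdots\times Y_m$ and let $\mathcal P(P_1,\dots,P_m)$ be the set of experiments $P:\Theta\to\Delta(\mathbf Y)$ whose $j$-th marginal is $P_j(\cdot|\theta)$ for every $\theta$ and $j$. A strategy is a map $\sigma:\mathbf Y\to\Delta(A)$. Define $V(P_1,\dots,P_m;(A,u))=\max_{\sigma}\min_{P\in\mathcal P(P_1,\dots,P_m)}\sum_{\theta}\sum_{\mathbf y\in\mathbf Y}P(\mathbf y|\theta)u(\theta,\sigma(\mathbf y))$, and call a maximizing $\sigma$ robustly optimal for $(A,u)$. The composition $\bigoplus_{\ell=1}^k(A_\ell,u_\ell)$ is the decision problem with action set $A_1\times\cdots\times A_k$ and utility $u(\theta,(a_1,\dots,a_k))=\sum_{\ell}u_\ell(\theta,a_\ell)$. For a decision problem let $\mathcal H(A,u)=\mathrm{co}\{u(\cdot,a):a\in A\}-\mathbb{R}_+^{\Theta}$ (Minkowski difference). Two decision problems $(A,u)$, $(A',u')$ are equivalent if $\mathcal H(A,u)=\mathcal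 H(A',u')$. *)

theory Defs
  imports "HOL-Analysis.Analysis"
begin

(* States: a finite type 's (the theorem assumes CARD('s) = 2, i.e. Theta = {1,2}). *)

definition dist_on :: "'a set \<Rightarrow> ('a \<Rightarrow> real) \<Rightarrow> bool" where
  "dist_on S \<alpha> \<longleftrightarrow> (\<forall>x\<in>S. 0 \<le> \<alpha> x) \<and> sum \<alpha> S = 1"

definition sigspace :: "nat \<Rightarrow> (nat \<Rightarrow> 'y set) \<Rightarrow> (nat \<Rightarrow> 'y) set" where
  "sigspace m Y = PiE {..<m} Y"

definition is_experiment :: "'y set \<Rightarrow> ('s \<Rightarrow> 'y \<Rightarrow> real) \<Rightarrow> bool" where
  "is_experiment Y P \<longleftrightarrow> finite Y \<and> (\<forall>\<theta>. dist_on Y (P \<theta>))"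

definition couplings :: "nat \<Rightarrow> (nat \<Rightarrow> 'y set) \<Rightarrow> (nat \<Rightarrow> 's \<Rightarrow> 'y \<Rightarrow> real)
    \<Rightarrow> ('s \<Rightarrow> (nat \<Rightarrow> 'y) \<Rightarrow> real) set" where
  "couplings m Y P = {Q. (\<forall>\<theta>. dist_on (sigspace m Y) (Q \<theta>)) \<and>
      (\<forall>\<theta> j y. j < m \<and> y \<in> Y j \<longrightarrow>
         sum (Q \<theta>) {ys \<in> sigspace m Y. ys j = y} = P j \<theta> y)}"

definition eu :: "'a set \<Rightarrow> ('s \<Rightarrow> 'a \<Rightarrow> real) \<Rightarrow> 's \<Rightarrow> ('a \<Rightarrow> real) \<Rightarrow> real" where
  "eu A u \<theta> \<alpha> = (\<Sum>a\<in>A. \<alpha> a * u \<theta> a)"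

definition strategy :: "'a set \<Rightarrow> (nat \<Rightarrow> 'y) set \<Rightarrow> ((nat \<Rightarrow> 'y) \<Rightarrow> 'a \<Rightarrow> real) \<Rightarrow> bool" where
  "strategy A YY \<sigma> \<longleftrightarrow> (\<forall>ys\<in>YY. dist_on A (\<sigma> ys))"

definition payoff :: "'a set \<Rightarrow> ('s::finite \<Rightarrow> 'a \<Rightarrow> real) \<Rightarrow> (nat \<Rightarrow> 'y) set
    \<Rightarrow> ('s \<Rightarrow> (nat \<Rightarrow> 'y) \<Rightarrow> real) \<Rightarrow> ((nat \<Rightarrow> 'y) \<Rightarrow> 'a \<Rightarrow> real) \<Rightarrow> real" where
  "payoff A u YY Q \<sigma> = (\<Sum>\<theta>\<in>UNIV. \<Sum>ys\<in>YY. Q \<theta> ys * eu A u \<theta> (\<sigma> ys))"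

definition worst :: "'a set \<Rightarrow> ('s::finite \<Rightarrow> 'a \<Rightarrow> real) \<Rightarrow> nat \<Rightarrow> (nat \<Rightarrow> 'y set)
    \<Rightarrow> (nat \<Rightarrow> 's \<Rightarrow> 'y \<Rightarrow> real) \<Rightarrow> ((nat \<Rightarrow> 'y) \<Rightarrow> 'a \<Rightarrow> real) \<Rightarrow> real" where
  "worst A u m Y P \<sigma> = (INF Q \<in> couplings m Y P. payoff A u (sigspace m Y) Q \<sigma>)"

definition robustly_optimal :: "'a set \<Rightarrow> ('s::finite \<Rightarrow> 'a \<Rightarrow> real) \<Rightarrow> nat \<Rightarrow> (nat \<Rightarrow> 'y set)
    \<Rightarrow> (nat \<Rightarrow> 's \<Rightarrow> 'y \<Rightarrow> real) \<Rightarrow> ((nat \<Rightarrow> 'y) \<Rightarrow> 'a \<Rightarrow> real) \<Rightarrow> bool" where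
  "robustly_optimal A u m Y P \<sigma> \<longleftrightarrow> strategy A (sigspace m Y) \<sigma> \<and>
     (\<forall>\<sigma>'. strategy A (sigspace m Y) \<sigma>' \<longrightarrow> worst A u m Y P \<sigma>' \<le> worst A u m Y P \<sigma>)"

definition compA :: "nat \<Rightarrow> (nat \<Rightarrow> 'b set) \<Rightarrow> (nat \<Rightarrow> 'b) set" where
  "compA k As = PiE {..<k} As"

definition compU :: "nat \<Rightarrow> (nat \<Rightarrow> 's \<Rightarrow> 'b \<Rightarrow> real) \<Rightarrow> 's \<Rightarrow> (nat \<Rightarrow> 'b) \<Rightarrow> real" where
  "compU k us \<theta> as = (\<Sum>l<k. us l \<theta> (as l))"

definition Hset :: "'a set \<Rightarrow> ('s::finite \<Rightarrow> 'a \<Rightarrow> real) \<Rightarrow> (real ^ 's) set" where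
  "Hset A u = {x - z | x z. x \<in> convex hull ((\<lambda>a. \<chi> \<theta>. u \<theta> a) ` A) \<and> (\<forall>\<theta>. 0 \<le> z $ \<theta>)}"

definition equivalent_dp :: "'a set \<Rightarrow> ('s::finite \<Rightarrow> 'a \<Rightarrow> real) \<Rightarrow> 'b set \<Rightarrow> ('s \<Rightarrow> 'b \<Rightarrow> real) \<Rightarrow> bool" where
  "equivalent_dp A u B v \<longleftrightarrow> Hset A u = Hset B v"

definition marginal :: "nat \<Rightarrow> (nat \<Rightarrow> 'b set) \<Rightarrow> ((nat \<Rightarrow> 'b) \<Rightarrow> real) \<Rightarrow> nat \<Rightarrow> 'b \<Rightarrow> real" where
  "marginal k As \<alpha> l b = (\<Sum>as\<in>{as \<in> compA k As. as l = b}. \<alpha> as)"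

end

theory Submission
  imports Defs
begin

lemma hull_to_dist:
  fixes u :: "'s::finite \<Rightarrow> 'a \<Rightarrow> real"
  assumes fin: "finite S" and x: "x \<in> convex hull ((\<lambda>a. \<chi> \<theta>. u \<theta> a) ` S)"
  shows "\<exists>\<alpha>. dist_on S \<alpha> \<and> (\<forall>\<theta>. x $ \<theta> = eu S u \<theta> \<alpha>)"
proof -
  define V where "V = {x::real^'s. \<exists>\<alpha>. dist_on S \<alpha> \<and> (\<forall>\<theta>. x $ \<theta> = eu S u \<theta> \<alpha>)}"
  have sub: "(\<lambda>a. \<chi> \<theta>. u \<theta> a) ` S \<subseteq> V"
  proof
    fix y assume "y \<in> (\<lambda>a. \<chi> \<theta>. u \<theta> a) ` S"
    then obtain a where a: "a \<in> S" "y = (\<chi> \<theta>. u \<theta> a)" by auto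
    let ?\<alpha> = "\<lambda>b. if b = a then 1 else 0 :: real"
    have "dist_on S ?\<alpha>" using a fin by (simp add: dist_on_def)
    moreover have "\<forall>\<theta>. y $ \<theta> = eu S u \<theta> ?\<alpha>" using a fin
      by (simp add: eu_def if_distrib[of "\<lambda>c. c * _"] sum.delta' cong: if_cong)
    ultimately show "y \<in> V" unfolding V_def by blast
  qed
  have cv: "convex V"
    unfolding convex_def
  proof (intro ballI allI impI)
    fix y z :: "real^'s" and p q :: real
    assume "y \<in> V" "z \<in> V" "0 \<le> p" "0 \<le> q" "p + q = 1"
    then obtain \<alpha> \<beta> where ab: "dist_on S \<alpha>" "\<forall>\<theta>. y $ \<theta> = eu S u \<theta> \<alpha>"
      "dist_on S \<beta>" "\<forall>\<theta>. z $ \<theta> = eu S u \<theta> \<beta>" and pq: "0 \<le> p" "0 \<le> q" "p + q = 1"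
      unfolding V_def by blast
    let ?\<gamma> = "\<lambda>b. p * \<alpha> b + q * \<beta> b"
    have "dist_on S ?\<gamma>" using ab pq
      by (simp add: dist_on_def sum.distrib sum_distrib_left[symmetric])
    moreover have "\<forall>\<theta>. (p *\<^sub>R y + q *\<^sub>R z) $ \<theta> = eu S u \<theta> ?\<gamma>"
      using ab by (simp add: eu_def algebra_simps sum.distrib sum_distrib_left)
    ultimately show "p *\<^sub>R y + q *\<^sub>R z \<in> V" unfolding V_def by blast
  qed
  have "convex hull ((\<lambda>a. \<chi> \<theta>. u \<theta> a) ` S) \<subseteq> V"
    using hull_minimal[of _ V convex, OF sub cv] .
  with x show ?thesis unfolding V_def by blast
qed

lemma dist_to_hull:
  fixes u :: "'s::finite \<Rightarrow> 'a \<Rightarrow> real"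
  assumes fin: "finite S" and d: "dist_on S \<alpha>"
  shows "(\<chi> \<theta>. eu S u \<theta> \<alpha>) \<in> convex hull ((\<lambda>a. \<chi> \<theta>. u \<theta> a) ` S)"
proof -
  have "(\<Sum>a\<in>S. \<alpha> a *\<^sub>R (\<chi> \<theta>. u \<theta> a)) \<in> convex hull ((\<lambda>a. \<chi> \<theta>. u \<theta> a) ` S)"
    apply (rule convex_sum[OF fin convex_convex_hull])
    using d by (auto simp: dist_on_def intro: hull_inc)
  moreover have "(\<Sum>a\<in>S. \<alpha> a *\<^sub>R (\<chi> \<theta>. u \<theta> a)) = (\<chi> \<theta>. eu S u \<theta> \<alpha>)"
    by (simp add: vec_eq_iff sum_component eu_def)
  ultimately show ?thesis by simp
qed

lemma dominate:
  fixes u :: "'s::finite \<Rightarrow> 'a \<Rightarrow> real" and v :: "'s \<Rightarrow> 'b \<Rightarrow> real"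
  assumes fS: "finite S" and fT: "finite T" and H: "Hset S u \<subseteq> Hset T v" and d: "dist_on S \<alpha>"
  shows "\<exists>\<beta>. dist_on T \<beta> \<and> (\<forall>\<theta>. eu S u \<theta> \<alpha> \<le> eu T v \<theta> \<beta>)"
proof -
  let ?x = "(\<chi> \<theta>. eu S u \<theta> \<alpha>)"
  have "?x \<in> Hset S u" unfolding Hset_def
    using dist_to_hull[OF fS d, of u] by (intro CollectI exI[of _ ?x] exI[of _ 0]) auto
  with H have "?x \<in> Hset T v" by blast
  then obtain y z where yz: "?x = y - z" "y \<in> convex hull ((\<lambda>a. \<chi> \<theta>. v \<theta> a) ` T)"
    "\<forall>\<theta>. 0 \<le> z $ \<theta>" unfolding Hset_def by blast
  obtain \<beta> where b: "dist_on T \<beta>" "\<forall>\<theta>. y $ \<theta> = eu T v \<theta> \<beta>"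
    using hull_to_dist[OF fT yz(2)] by blast
  have "\<forall>\<theta>. eu S u \<theta> \<alpha> \<le> eu T v \<theta> \<beta>"
  proof
    fix \<theta>
    have "eu S u \<theta> \<alpha> = y $ \<theta> - z $ \<theta>" using arg_cong[OF yz(1), of "\<lambda>w. w $ \<theta>"] by simp
    then show "eu S u \<theta> \<alpha> \<le> eu T v \<theta> \<beta>" using b yz(3) by smt
  qed
  with b show ?thesis by blast
qed

lemma eu_comp:
  assumes "\<forall>l<k. finite (As l)"
  shows "eu (compA k As) (compU k us) \<theta> \<alpha> = (\<Sum>l<k. eu (As l) (us l) \<theta> (marginal k As \<alpha> l))"
proof -
  have fin: "finite (compA k As)" unfolding compA_def using assms by (intro finite_PiE) auto
  have "eu (compA k As) (compU k us) \<theta> \<alpha> = (\<Sum>l<k. \<Sum>as\<in>compA k As. \<alpha> as * us l \<theta> (as l))"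
    unfolding eu_def compU_def by (simp add: sum_distrib_left sum.swap[of _ "compA k As"])
  also have "\<dots> = (\<Sum>l<k. eu (As l) (us l) \<theta> (marginal k As \<alpha> l))"
  proof (rule sum.cong[OF refl])
    fix l assume l: "l \<in> {..<k}"
    have "eu (As l) (us l) \<theta> (marginal k As \<alpha> l)
        = (\<Sum>b\<in>As l. \<Sum>as\<in>{as \<in> compA k As. as l = b}. \<alpha> as * us l \<theta> (as l))"
      unfolding eu_def marginal_def by (auto simp: sum_distrib_right intro!: sum.cong)
    also have "\<dots> = (\<Sum>as\<in>compA k As. \<alpha> as * us l \<theta> (as l))"
      apply (rule sum.group[OF fin])
      using assms l by (auto simp: compA_def PiE_mem)
    finally show "(\<Sum>as\<in>compA k As. \<alpha> as * us l \<theta> (as l)) = eu (As l) (us l) \<theta> (marginal k As \<alpha> l)"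
      by simp
  qed
  finally show ?thesis .
qed

lemma payoff_mono:
  assumes "\<forall>\<theta>. \<forall>ys\<in>YY. 0 \<le> Q \<theta> ys"
    and "\<forall>ys\<in>YY. \<forall>\<theta>. eu A u \<theta> (\<sigma> ys) \<le> eu B v \<theta> (\<tau> ys)"
  shows "payoff A u YY Q \<sigma> \<le> payoff B v YY Q \<tau>"
  unfolding payoff_def using assms by (intro sum_mono mult_left_mono) auto

lemma payoff_lower:
  fixes u :: "'s::finite \<Rightarrow> 'a \<Rightarrow> real"
  assumes fin: "finite YY" and d: "\<forall>\<theta>. dist_on YY (Q \<theta>)"
  shows "- (\<Sum>\<theta>\<in>UNIV. \<Sum>ys\<in>YY. \<bar>eu A u \<theta> (\<sigma> ys)\<bar>) \<le> payoff A u YY Q \<sigma>"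
proof -
  have "\<And>\<theta> ys. ys \<in> YY \<Longrightarrow> - \<bar>eu A u \<theta> (\<sigma> ys)\<bar> \<le> Q \<theta> ys * eu A u \<theta> (\<sigma> ys)"
  proof -
    fix \<theta> ys assume ys: "ys \<in> YY"
    have q0: "0 \<le> Q \<theta> ys" using d ys by (auto simp: dist_on_def)
    have "Q \<theta> ys \<le> sum (Q \<theta>) YY"
      by (rule member_le_sum[OF ys _ fin]) (use d in \<open>auto simp: dist_on_def\<close>)
    then have q1: "Q \<theta> ys \<le> 1" using d by (simp add: dist_on_def)
    have "\<bar>Q \<theta> ys * eu A u \<theta> (\<sigma> ys)\<bar> \<le> \<bar>eu A u \<theta> (\<sigma> ys)\<bar>"
      using q0 q1 by (simp add: abs_mult mult_left_le_one_le)
    then show "- \<bar>eu A u \<theta> (\<sigma> ys)\<bar> \<le> Q \<theta> ys * eu A u \<theta> (\<sigma> ys)" by linarith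
  qed
  then have "(\<Sum>\<theta>\<in>UNIV. \<Sum>ys\<in>YY. - \<bar>eu A u \<theta> (\<sigma> ys)\<bar>) \<le> payoff A u YY Q \<sigma>"
    unfolding payoff_def by (intro sum_mono) auto
  then show ?thesis by (simp add: sum_negf)
qed

lemma worst_mono:
  fixes u :: "'s::finite \<Rightarrow> 'a \<Rightarrow> real" and v :: "'s \<Rightarrow> 'b \<Rightarrow> real"
  assumes fin: "finite (sigspace m Y)"
    and le: "\<forall>ys\<in>sigspace m Y. \<forall>\<theta>. eu A u \<theta> (\<sigma> ys) \<le> eu B v \<theta> (\<tau> ys)"
  shows "worst A u m Y P \<sigma> \<le> worst B v m Y P \<tau>"
proof (cases "couplings m Y P = {}")
  case True then show ?thesis by (simp add: worst_def)
next
  case False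
  show ?thesis unfolding worst_def
  proof (rule cINF_mono[OF False])
    show "bdd_below ((\<lambda>Q. payoff A u (sigspace m Y) Q \<sigma>) ` couplings m Y P)"
      unfolding bdd_below_def
      by (rule exI[of _ "- (\<Sum>\<theta>\<in>UNIV. \<Sum>ys\<in>sigspace m Y. \<bar>eu A u \<theta> (\<sigma> ys)\<bar>)"])
         (auto intro!: payoff_lower[OF fin] simp: couplings_def)
    fix Q assume Q: "Q \<in> couplings m Y P"
    have "payoff A u (sigspace m Y) Q \<sigma> \<le> payoff B v (sigspace m Y) Q \<tau>"
      by (rule payoff_mono) (use Q le in \<open>auto simp: couplings_def dist_on_def\<close>)
    with Q show "\<exists>n\<in>couplings m Y P. payoff A u (sigspace m Y) n \<sigma> \<le> payoff B v (sigspace m Y) Q \<tau>"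
      by blast
  qed
qed

theorem lemma5:
  fixes A :: "'a set" and u :: "'s::finite \<Rightarrow> 'a \<Rightarrow> real"
    and As :: "nat \<Rightarrow> 'b set" and us :: "nat \<Rightarrow> 's \<Rightarrow> 'b \<Rightarrow> real" and k :: nat
    and Y :: "nat \<Rightarrow> 'y set" and P :: "nat \<Rightarrow> 's \<Rightarrow> 'y \<Rightarrow> real" and m :: nat
    and \<sigma> :: "(nat \<Rightarrow> 'y) \<Rightarrow> (nat \<Rightarrow> 'b) \<Rightarrow> real"
  assumes "CARD('s) = 2"
    and "\<forall>j<m. is_experiment (Y j) (P j)"
    and "finite A" and "A \<noteq> {}"
    and "\<forall>l<k. finite (As l) \<and> As l \<noteq> {}"
    and "equivalent_dp A u (compA k As) (compU k us)"
    and "robustly_optimal (compA k As) (compU k us) m Y P \<sigma>"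
  shows "(\<exists>\<sigma>s. strategy A (sigspace m Y) \<sigma>s \<and>
            (\<forall>ys\<in>sigspace m Y. \<forall>\<theta>.
               eu A u \<theta> (\<sigma>s ys) \<ge> (\<Sum>l<k. eu (As l) (us l) \<theta> (marginal k As (\<sigma> ys) l))))
       \<and> (\<forall>\<sigma>s. strategy A (sigspace m Y) \<sigma>s \<and>
            (\<forall>ys\<in>sigspace m Y. \<forall>\<theta>.
               eu A u \<theta> (\<sigma>s ys) \<ge> (\<Sum>l<k. eu (As l) (us l) \<theta> (marginal k As (\<sigma> ys) l)))
            \<longrightarrow> robustly_optimal A u m Y P \<sigma>s)"
proof -
  let ?YY = "sigspace m Y" and ?C = "compA k As" and ?U = "compU k us"
  have finAs: "\<forall>l<k. finite (As l)" using assms(5) by auto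
  have finC: "finite ?C" unfolding compA_def using finAs by (intro finite_PiE) auto
  have finYY: "finite ?YY" unfolding sigspace_def using assms(2)
    by (intro finite_PiE) (auto simp: is_experiment_def)
  have H1: "Hset ?C ?U \<subseteq> Hset A u" and H2: "Hset A u \<subseteq> Hset ?C ?U"
    using assms(6) by (auto simp: equivalent_dp_def)
  have ro: "strategy ?C ?YY \<sigma>"
    "\<And>\<sigma>'. strategy ?C ?YY \<sigma>' \<Longrightarrow> worst ?C ?U m Y P \<sigma>' \<le> worst ?C ?U m Y P \<sigma>"
    using assms(7) unfolding robustly_optimal_def by auto
  have ecomp: "\<And>\<theta> \<alpha>. eu ?C ?U \<theta> \<alpha> = (\<Sum>l<k. eu (As l) (us l) \<theta> (marginal k As \<alpha> l))"
    by (rule eu_comp[OF finAs])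
  have "\<forall>ys\<in>?YY. \<exists>\<beta>. dist_on A \<beta> \<and> (\<forall>\<theta>. eu ?C ?U \<theta> (\<sigma> ys) \<le> eu A u \<theta> \<beta>)"
    using ro(1) dominate[OF finC assms(3) H1] by (auto simp: strategy_def)
  then obtain f where f: "\<forall>ys\<in>?YY. dist_on A (f ys) \<and> (\<forall>\<theta>. eu ?C ?U \<theta> (\<sigma> ys) \<le> eu A u \<theta> (f ys))"
    by (metis bchoice)
  have part1: "\<exists>\<sigma>s. strategy A ?YY \<sigma>s \<and>
            (\<forall>ys\<in>?YY. \<forall>\<theta>. eu A u \<theta> (\<sigma>s ys) \<ge> (\<Sum>l<k. eu (As l) (us l) \<theta> (marginal k As (\<sigma> ys) l)))"
    using f by (intro exI[of _ f]) (auto simp: strategy_def ecomp[symmetric])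
  have part2: "robustly_optimal A u m Y P \<sigma>s"
    if s: "strategy A ?YY \<sigma>s" and le: "\<forall>ys\<in>?YY. \<forall>\<theta>.
               eu A u \<theta> (\<sigma>s ys) \<ge> (\<Sum>l<k. eu (As l) (us l) \<theta> (marginal k As (\<sigma> ys) l))" for \<sigma>s
  proof -
    have w1: "worst ?C ?U m Y P \<sigma> \<le> worst A u m Y P \<sigma>s"
      by (rule worst_mono[OF finYY]) (use le in \<open>simp add: ecomp\<close>)
    have "worst A u m Y P \<sigma>' \<le> worst A u m Y P \<sigma>s" if s': "strategy A ?YY \<sigma>'" for \<sigma>'
    proof -
      have "\<forall>ys\<in>?YY. \<exists>\<beta>. dist_on ?C \<beta> \<and> (\<forall>\<theta>. eu A u \<theta> (\<sigma>' ys) \<le> eu ?C ?U \<theta> \<beta>)"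
        using s' dominate[OF assms(3) finC H2] by (auto simp: strategy_def)
      then obtain g where g: "\<forall>ys\<in>?YY. dist_on ?C (g ys) \<and> (\<forall>\<theta>. eu A u \<theta> (\<sigma>' ys) \<le> eu ?C ?U \<theta> (g ys))"
        by (metis bchoice)
      have "worst A u m Y P \<sigma>' \<le> worst ?C ?U m Y P g"
        by (rule worst_mono[OF finYY]) (use g in blast)
      also have "\<dots> \<le> worst ?C ?U m Y P \<sigma>"
        by (rule ro(2)) (use g in \<open>auto simp: strategy_def\<close>)
      finally show ?thesis using w1 by linarith
    qed
    with s show ?thesis unfolding robustly_optimal_def by blast
  qed
  show ?thesis using part1 part2 by blast
qed

end
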